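(* For norm-one $a,b\in\mathbb{O}$, the algebras ${}^*\mathbb{O}_l(a,1)$ and ${}^*\mathbb{O}_l(b,1)$ are isomorphic if and only if $|\mathrm{Re}(a)|=|\mathrm{Re}(b)|$.
   Context: $\mathbb{O}$ is the real octonion algebra; $\mathrm{Re}(a)$ is the real part of $a$ (its component along $1$ in $\mathbb{O}=\mathbb{R}\oplus\mathrm{Im}(\mathbb{O})$), and $\bar x$ is conjugation. For norm-one $a$, ${}^*\mathbb{O}_l(a,1)$ is the normed space of $\mathbb{O}$ with product $x\odot y=(\bar x a)y$. *)

theory Defs
  imports "HOL-Analysis.Analysis"
begin

text \<open>Quaternions as pairs of complex numbers and octonions as pairs of quaternions,
  via the Cayley-Dickson construction (a,b)(c,d) = (ac - d^* b, da + b c^*),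
  conjugation (a,b)^* = (a^*, -b).  The underlying real vector space of
  oct is the product vector space (Euclidean norm on R^8).\<close>

type_synonym quat = "complex \<times> complex"
type_synonym oct = "quat \<times> quat"

fun qmul :: "quat \<Rightarrow> quat \<Rightarrow> quat" where
  "qmul (a, b) (c, d) = (a * c - cnj d * b, d * a + b * cnj c)"

fun qcnj :: "quat \<Rightarrow> quat" where
  "qcnj (a, b) = (cnj a, - b)"

fun omul :: "oct \<Rightarrow> oct \<Rightarrow> oct" where
  "omul (p, q) (r, s) = (qmul p r - qmul (qcnj s) q, qmul s p + qmul q (qcnj r))"

fun ocnj :: "oct \<Rightarrow> oct" where
  "ocnj (p, q) = (qcnj p, - q)"

text \<open>Real part: the component along the unit 1 = ((1,0),(0,0)).\<close>
fun oRe :: "oct \<Rightarrow> real" where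
  "oRe ((a, b), q) = Re a"

text \<open>The product of *O_l(a,1): x \<odot> y = (conj(x) a) y.\<close>
definition star_mul :: "oct \<Rightarrow> oct \<Rightarrow> oct \<Rightarrow> oct" where
  "star_mul a x y = omul (omul (ocnj x) a) y"

definition alg_iso :: "(oct \<Rightarrow> oct \<Rightarrow> oct) \<Rightarrow> (oct \<Rightarrow> oct \<Rightarrow> oct) \<Rightarrow> (oct \<Rightarrow> oct) \<Rightarrow> bool" where
  "alg_iso m1 m2 f \<longleftrightarrow> linear f \<and> bij f \<and> (\<forall>x y. f (m1 x y) = m2 (f x) (f y))"

end

theory Submission
  imports Defs
begin

lemma qmul_assoc: "qmul (qmul x y) z = qmul x (qmul y z)"
  by (cases x; cases y; cases z) (simp add: algebra_simps)

lemma qcnj_qmul: "qcnj (qmul x y) = qmul (qcnj y) (qcnj x)"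
  by (cases x; cases y) (simp add: algebra_simps)

lemma qmul_add_right: "qmul x (y + z) = qmul x y + qmul x z"
  by (cases x; cases y; cases z) (simp add: algebra_simps)

lemma qmul_scale_right: "qmul x (c *\<^sub>R y) = c *\<^sub>R qmul x y"
  by (cases x; cases y) (simp add: algebra_simps scaleR_conv_of_real)

lemma qmul_one_left: "qmul (1, 0) y = y"
  by (cases y) simp

lemma qcnj_mul_self: "qmul (qcnj r) r = (of_real ((cmod (fst r))\<^sup>2 + (cmod (snd r))\<^sup>2), 0)"
proof (cases r)
  case (Pair a b)
  have "cnj a * a = of_real ((cmod a)\<^sup>2)" "cnj b * b = of_real ((cmod b)\<^sup>2)"
    by (metis complex_norm_square mult.commute of_real_power)+
  then show ?thesis using Pair by simp
qed

definition psi :: "quat \<Rightarrow> oct \<Rightarrow> oct" where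
  "psi r x = (fst x, qmul r (snd x))"

definition unitq :: "quat \<Rightarrow> bool" where
  "unitq r \<longleftrightarrow> (cmod (fst r))\<^sup>2 + (cmod (snd r))\<^sup>2 = 1"

lemma psi_mul:
  assumes "unitq r"
  shows "psi r (omul x y) = omul (psi r x) (psi r y)"
proof -
  have u: "qmul (qcnj r) r = (1,0)" using assms by (simp add: qcnj_mul_self unitq_def)
  obtain p q s t where x: "x = (p,q)" and y: "y = (s,t)" by (cases x, cases y) 
  have 1: "qmul (qcnj (qmul r t)) (qmul r q) = qmul (qcnj t) q"
  proof -
    have "qmul (qcnj (qmul r t)) (qmul r q) = qmul (qcnj t) (qmul (qcnj r) (qmul r q))"
      by (simp add: qcnj_qmul qmul_assoc)
    also have "\<dots> = qmul (qcnj t) (qmul (qmul (qcnj r) r) q)"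
      by (simp only: qmul_assoc)
    also have "\<dots> = qmul (qcnj t) q" by (simp add: u qmul_one_left)
    finally show ?thesis .
  qed
  show ?thesis
    unfolding psi_def x y by (simp only: omul.simps fst_conv snd_conv 1 qmul_add_right qmul_assoc)
qed

definition tau :: "oct \<Rightarrow> oct" where
  "tau x = ((fst (fst x), \<i> * cnj (snd (snd x))), (snd (fst x), \<i> * cnj (fst (snd x))))"

definition sig :: "oct \<Rightarrow> oct" where
  "sig x = ((Complex (Re (fst (fst x))) (Im (fst (snd x))), Complex (Im (snd (fst x))) (Re (snd (snd x)))),
            (Complex (Im (fst (fst x))) (Re (fst (snd x))), Complex (Re (snd (fst x))) (Im (snd (snd x)))))"

lemma tau_mul: "tau (omul x y) = omul (tau x) (tau y)"
  apply (cases x; cases y)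
  apply (auto simp: tau_def complex_eq_iff algebra_simps)
  done

lemma sig_mul: "sig (omul x y) = omul (sig x) (sig y)"
  apply (cases x; cases y)
  apply (auto simp: sig_def complex_eq_iff algebra_simps)
  done

lemma iso_comp:
  assumes "alg_iso m1 m2 f" "alg_iso m2 m3 g"
  shows "alg_iso m1 m3 (g \<circ> f)"
proof -
  have "linear f" "bij f" "\<And>x y. f (m1 x y) = m2 (f x) (f y)"
       "linear g" "bij g" "\<And>x y. g (m2 x y) = m3 (g x) (g y)"
    using assms unfolding alg_iso_def by blast+
  then show ?thesis unfolding alg_iso_def by (simp add: linear_compose bij_comp)
qed

lemma iso_inv:
  assumes "alg_iso m1 m2 f"
  shows "alg_iso m2 m1 (inv f)"
proof -
  have l: "linear f" and b: "bij f" and h: "\<And>x y. f (m1 x y) = m2 (f x) (f y)"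
    using assms unfolding alg_iso_def by auto
  have fi: "\<And>x. f (inv f x) = x" using b by (simp add: bij_is_surj surj_f_inv_f)
  have if_: "\<And>x. inv f (f x) = x" using b by (simp add: bij_is_inj)
  have "linear (inv f)"
  proof (rule linearI)
    fix x y
    have "f (inv f x + inv f y) = x + y" using linear_add[OF l] fi by simp
    then show "inv f (x + y) = inv f x + inv f y" by (metis if_)
  next
    fix r x
    have "f (r *\<^sub>R inv f x) = r *\<^sub>R x" using linear_scale[OF l] fi by simp
    then show "inv f (r *\<^sub>R x) = r *\<^sub>R inv f x" by (metis if_)
  qed
  moreover have "bij (inv f)" using b by (simp add: bij_imp_bij_inv)
  moreover have "inv f (m2 x y) = m1 (inv f x) (inv f y)" for x y
  proof -
    have "f (m1 (inv f x) (inv f y)) = m2 x y" by (simp add: h fi)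
    then show ?thesis by (metis if_)
  qed
  ultimately show ?thesis unfolding alg_iso_def by auto
qed

lemma aut_iso:
  assumes "linear \<phi>" "bij \<phi>" "\<And>x y. \<phi> (omul x y) = omul (\<phi> x) (\<phi> y)"
    "\<And>x. \<phi> (ocnj x) = ocnj (\<phi> x)"
  shows "alg_iso (star_mul a) (star_mul (\<phi> a)) \<phi>"
  using assms unfolding alg_iso_def star_mul_def by simp

lemma neg_iso: "alg_iso (star_mul a) (star_mul (- a)) uminus"
proof -
  have "linear (uminus :: oct \<Rightarrow> oct)" by (rule linearI) auto
  moreover have "bij (uminus :: oct \<Rightarrow> oct)" by (rule o_bij[of uminus]) auto
  moreover have "- star_mul a x y = star_mul (- a) (- x) (- y)" for x y :: oct
    unfolding star_mul_def
    by (cases x; cases y; cases a) (auto simp: algebra_simps)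
  ultimately show ?thesis unfolding alg_iso_def by auto
qed


lemma qmul_neg_right: "qmul x (- y) = - qmul x y"
  by (cases x; cases y) (simp add: algebra_simps)

lemma unitq_cnj: "unitq r \<Longrightarrow> unitq (qcnj r)"
  by (cases r) (simp add: unitq_def)

lemma qcnj_qcnj: "qcnj (qcnj r) = r"
  by (cases r) simp

lemma psi_aut:
  assumes "unitq r"
  shows "linear (psi r)" "bij (psi r)" "\<And>x y. psi r (omul x y) = omul (psi r x) (psi r y)"
    "\<And>x. psi r (ocnj x) = ocnj (psi r x)"
proof -
  show "linear (psi r)"
    by (rule linearI) (simp_all add: psi_def qmul_add_right qmul_scale_right)
  have u1: "qmul (qcnj r) r = (1,0)" using assms by (simp add: qcnj_mul_self unitq_def)
  have u2: "qmul r (qcnj r) = (1,0)"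
  proof -
    have "qmul r (qcnj r) = (of_real ((cmod (fst (qcnj r)))\<^sup>2 + (cmod (snd (qcnj r)))\<^sup>2), 0)"
      using qcnj_mul_self[of "qcnj r"] by (simp only: qcnj_qcnj)
    then show ?thesis by (simp only: unitq_cnj[OF assms, unfolded unitq_def]) simp
  qed
  show "bij (psi r)"
  proof (rule o_bij[of "psi (qcnj r)"])
    show "psi (qcnj r) \<circ> psi r = id"
      by (rule ext) (simp add: psi_def flip: qmul_assoc add: u1 qmul_one_left)
    show "psi r \<circ> psi (qcnj r) = id"
      by (rule ext) (simp add: psi_def flip: qmul_assoc add: u2 qmul_one_left)
  qed
  show "\<And>x y. psi r (omul x y) = omul (psi r x) (psi r y)" using psi_mul[OF assms] .
  show "psi r (ocnj x) = ocnj (psi r x)" for x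
  proof -
    obtain p q where "x = (p,q)" by (cases x)
    then show ?thesis by (simp only: psi_def ocnj.simps fst_conv snd_conv qmul_neg_right)
  qed
qed

lemma tau_aut:
  shows "linear tau" "bij tau" "\<And>x. tau (ocnj x) = ocnj (tau x)"
proof -
  show "linear tau"
    by (rule linearI) (auto simp: tau_def complex_eq_iff)
  define ti :: "oct \<Rightarrow> oct" where
    "ti x = ((fst (fst x), fst (snd x)), (\<i> * cnj (snd (snd x)), \<i> * cnj (snd (fst x))))" for x
  show "bij tau"
    by (rule o_bij[of ti]) (auto simp: tau_def ti_def complex_eq_iff)
  show "\<And>x. tau (ocnj x) = ocnj (tau x)"
    by (case_tac x) (auto simp: tau_def complex_eq_iff)
qed

lemma sig_aut:
  shows "linear sig" "bij sig" "\<And>x. sig (ocnj x) = ocnj (sig x)"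
proof -
  show "linear sig"
    by (rule linearI) (auto simp: sig_def complex_eq_iff)
  define si :: "oct \<Rightarrow> oct" where
    "si x = ((Complex (Re (fst (fst x))) (Re (fst (snd x))), Complex (Re (snd (snd x))) (Re (snd (fst x)))),
             (Complex (Im (fst (snd x))) (Im (fst (fst x))), Complex (Im (snd (fst x))) (Im (snd (snd x)))))" for x
  show "bij sig"
    by (rule o_bij[of si]) (auto simp: sig_def si_def complex_eq_iff)
  show "\<And>x. sig (ocnj x) = ocnj (sig x)"
    by (case_tac x) (auto simp: sig_def complex_eq_iff)
qed


definition qn :: "quat \<Rightarrow> real" where
  "qn s = sqrt ((cmod (fst s))\<^sup>2 + (cmod (snd s))\<^sup>2)"

definition qunit :: "quat \<Rightarrow> quat" where
  "qunit s = (if s = (0,0) then (1,0) else (cnj (fst s) / of_real (qn s), - snd s / of_real (qn s)))"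

lemma qn_pos: "s \<noteq> (0,0) \<Longrightarrow> qn s > 0"
  by (cases s) (auto simp: qn_def add_pos_nonneg add_nonneg_pos)

lemma qunit_unit: "unitq (qunit s)"
proof (cases "s = (0,0)")
  case True then show ?thesis by (simp add: qunit_def unitq_def)
next
  case False
  obtain s1 s2 where s: "s = (s1, s2)" by (cases s)
  have p: "qn s > 0" using qn_pos[OF False] .
  have "(qn s)\<^sup>2 = (cmod (fst s))\<^sup>2 + (cmod (snd s))\<^sup>2" unfolding qn_def by simp
  with p show ?thesis using False
    by (simp add: s qunit_def unitq_def norm_divide power_divide add_divide_distrib[symmetric])
qed

lemma qunit_mul: "qmul (qunit s) s = (of_real (qn s), 0)"
proof (cases "s = (0,0)")
  case True then show ?thesis by (simp add: qunit_def qn_def)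
next
  case False
  obtain s1 s2 where s: "s = (s1, s2)" by (cases s)
  have p: "qn s > 0" using qn_pos[OF False] .
  have sq: "(qn s)\<^sup>2 = (cmod s1)\<^sup>2 + (cmod s2)\<^sup>2" unfolding qn_def s by simp
  have e1: "cnj s1 * s1 = of_real ((cmod s1)\<^sup>2)" "cnj s2 * s2 = of_real ((cmod s2)\<^sup>2)"
    by (metis complex_norm_square mult.commute of_real_power)+
  have "cnj s1 / of_real (qn s) * s1 - cnj s2 * (- s2 / of_real (qn s))
        = (cnj s1 * s1 + cnj s2 * s2) / of_real (qn s)"
    using p by (simp add: field_simps)
  also have "\<dots> = of_real ((qn s)\<^sup>2) / of_real (qn s)" by (simp add: e1 sq)
  also have "\<dots> = of_real (qn s)" using p by (simp add: power2_eq_square)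
  finally have "cnj s1 / of_real (qn s) * s1 - cnj s2 * (- s2 / of_real (qn s)) = of_real (qn s)" .
  moreover have "qunit s = (cnj s1 / of_real (qn s), - s2 / of_real (qn s))"
    using False s by (simp add: qunit_def)
  ultimately show ?thesis using s by (simp add: algebra_simps)
qed

lemma iso_psi: "unitq r \<Longrightarrow> alg_iso (star_mul a) (star_mul (psi r a)) (psi r)"
  using psi_aut[of r] by (intro aut_iso) auto

lemma iso_tau: "alg_iso (star_mul a) (star_mul (tau a)) tau"
  using tau_aut tau_mul by (intro aut_iso) auto

lemma iso_sig: "alg_iso (star_mul a) (star_mul (sig a)) sig"
  using sig_aut sig_mul by (intro aut_iso) auto

definition Sd :: "real \<Rightarrow> oct" where
  "Sd \<alpha> = ((of_real \<alpha>, 0), (of_real (sqrt (1 - \<alpha>\<^sup>2)), 0))"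

lemma std_iso:
  assumes "norm a = 1"
  shows "\<exists>f. alg_iso (star_mul a) (star_mul (Sd (oRe a))) f"
proof -
  obtain z1 z2 z3 z4 where a: "a = ((z1,z2),(z3,z4))" by (metis prod.collapse)
  define N1 where "N1 = qn (z3,z4)"
  define r1 where "r1 = qunit (z3,z4)"
  have A1: "psi r1 a = ((z1,z2),(of_real N1, 0))"
    by (simp add: psi_def a r1_def N1_def qunit_mul)
  have A2: "tau (psi r1 a) = ((z1,0),(z2, \<i> * of_real N1))"
    by (simp only: A1) (simp add: tau_def)
  define N2 where "N2 = qn (z2, \<i> * of_real N1)"
  define r2 where "r2 = qunit (z2, \<i> * of_real N1)"
  have A3: "psi r2 (tau (psi r1 a)) = ((z1,0),(of_real N2, 0))"
    by (simp only: A2) (simp add: psi_def r2_def N2_def qunit_mul)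
  have A4: "sig (psi r2 (tau (psi r1 a))) = ((of_real (Re z1), 0),(Complex (Im z1) N2, 0))"
    by (simp only: A3) (simp add: sig_def complex_eq_iff)
  define N3 where "N3 = qn (Complex (Im z1) N2, 0)"
  define r3 where "r3 = qunit (Complex (Im z1) N2, 0)"
  have A5: "psi r3 (sig (psi r2 (tau (psi r1 a)))) = ((of_real (Re z1), 0),(of_real N3, 0))"
    by (simp only: A4) (simp add: psi_def r3_def N3_def qunit_mul)
  have n: "(cmod z1)\<^sup>2 + (cmod z2)\<^sup>2 + (cmod z3)\<^sup>2 + (cmod z4)\<^sup>2 = 1"
  proof -
    have "norm a = sqrt ((cmod z1)\<^sup>2 + (cmod z2)\<^sup>2 + ((cmod z3)\<^sup>2 + (cmod z4)\<^sup>2))"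
      by (simp add: a norm_Pair)
    with assms show ?thesis by simp
  qed
  have N1sq: "N1\<^sup>2 = (cmod z3)\<^sup>2 + (cmod z4)\<^sup>2" by (simp add: N1_def qn_def)
  have N1nn: "N1 \<ge> 0" by (simp add: N1_def qn_def)
  have N2sq: "N2\<^sup>2 = (cmod z2)\<^sup>2 + N1\<^sup>2" using N1nn by (simp add: N2_def qn_def norm_mult)
  have N2nn: "N2 \<ge> 0" by (simp add: N2_def qn_def)
  have "N3 = sqrt ((Im z1)\<^sup>2 + N2\<^sup>2)" by (simp add: N3_def qn_def cmod_def)
  also have "\<dots> = sqrt (1 - (Re z1)\<^sup>2)"
    using n N1sq N2sq by (simp add: cmod_power2)
  finally have N3: "N3 = sqrt (1 - (Re z1)\<^sup>2)" .
  have fin: "psi r3 (sig (psi r2 (tau (psi r1 a)))) = Sd (oRe a)"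
    by (simp only: A5) (simp add: N3 Sd_def a)
  have "alg_iso (star_mul a) (star_mul (psi r3 (sig (psi r2 (tau (psi r1 a))))))
          (psi r3 \<circ> (sig \<circ> (psi r2 \<circ> (tau \<circ> psi r1))))"
  proof -
    have i1: "alg_iso (star_mul a) (star_mul (psi r1 a)) (psi r1)"
      by (rule iso_psi[OF qunit_unit[of "(z3,z4)", folded r1_def]])
    have i2: "alg_iso (star_mul a) (star_mul (tau (psi r1 a))) (tau \<circ> psi r1)"
      by (rule iso_comp[OF i1 iso_tau])
    have i3: "alg_iso (star_mul a) (star_mul (psi r2 (tau (psi r1 a)))) (psi r2 \<circ> (tau \<circ> psi r1))"
      by (rule iso_comp[OF i2 iso_psi[OF qunit_unit[of "(z2, \<i> * of_real N1)", folded r2_def]]])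
    have i4: "alg_iso (star_mul a) (star_mul (sig (psi r2 (tau (psi r1 a))))) (sig \<circ> (psi r2 \<circ> (tau \<circ> psi r1)))"
      by (rule iso_comp[OF i3 iso_sig])
    show ?thesis
      by (rule iso_comp[OF i4 iso_psi[OF qunit_unit[of "(Complex (Im z1) N2, 0)", folded r3_def]]])
  qed
  then show ?thesis using fin by auto
qed


definition Tm :: "real \<Rightarrow> real \<Rightarrow> oct \<Rightarrow> oct" where
  "Tm g d x = ((Complex (g * Re (fst (fst x)) + d * Re (fst (snd x))) (- g * Im (fst (fst x)) + d * Im (fst (snd x))),
                Complex (- g * Re (snd (fst x)) + d * Re (snd (snd x))) (- g * Im (snd (fst x)) + d * Im (snd (snd x)))),
               (Complex (- g * Re (fst (snd x)) + d * Re (fst (fst x))) (- g * Im (fst (snd x)) - d * Im (fst (fst x))),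
                Complex (- g * Re (snd (snd x)) - d * Re (snd (fst x))) (- g * Im (snd (snd x)) - d * Im (snd (fst x)))))"

definition S2 :: "real \<Rightarrow> real \<Rightarrow> oct" where
  "S2 a b = ((of_real a, 0), (of_real b, 0))"

lemma T_S2: "star_mul (S2 a b) x (S2 a b) = Tm (a*a - b*b) (2*a*b) x"
  by (cases x) (auto simp: star_mul_def S2_def Tm_def complex_eq_iff algebra_simps)

lemma omul_one_right: "omul w ((1,0),(0,0)) = w"
  by (cases w) (auto simp: complex_eq_iff zero_prod_def)

lemma omul_one_left: "omul ((1,0),(0,0)) w = w"
  by (cases w) (auto simp: complex_eq_iff zero_prod_def)

lemma S2_right: "omul (omul w (S2 a b)) (ocnj (S2 a b)) = (a*a + b*b) *\<^sub>R w"
  by (cases w) (auto simp: S2_def complex_eq_iff algebra_simps)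

lemma S2_cnj: "omul (ocnj (S2 a b)) (S2 a b) = ((of_real (a*a+b*b), 0), (0,0))"
  by (auto simp: S2_def complex_eq_iff algebra_simps)

lemma ocnj_ocnj: "ocnj (ocnj x) = x"
  by (cases x) (auto simp: complex_eq_iff)

lemma Sd_S2: "Sd a = S2 a (sqrt (1 - a\<^sup>2))"
  by (simp add: Sd_def S2_def)

lemma S2_unit:
  assumes "a*a + b*b = 1"
  shows "star_mul (S2 a b) (S2 a b) y = y"
  unfolding star_mul_def S2_cnj assms by (simp add: omul_one_left)

lemma S2_unit_uniq:
  assumes "a*a + b*b = 1" and "\<forall>y. star_mul (S2 a b) e y = y"
  shows "e = S2 a b"
proof -
  have "omul (ocnj e) (S2 a b) = ((1,0),(0,0))"
    using assms(2)[rule_format, of "((1,0),(0,0))"] by (simp add: star_mul_def omul_one_right)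
  then have "omul (omul (ocnj e) (S2 a b)) (ocnj (S2 a b)) = ocnj (S2 a b)"
    by (simp add: omul_one_left)
  then have "ocnj e = ocnj (S2 a b)" using S2_right[of "ocnj e" a b] assms(1) by simp
  then show ?thesis by (metis ocnj_ocnj)
qed

definition PP :: "(oct \<Rightarrow> oct) \<Rightarrow> real \<Rightarrow> bool" where
  "PP T k \<longleftrightarrow> (\<exists>x. T (T x) \<noteq> x \<and> T (T x) + (2*k) *\<^sub>R T x + x = 0)"

definition FF :: "(oct \<Rightarrow> oct) \<Rightarrow> oct \<Rightarrow> bool" where
  "FF T e \<longleftrightarrow> (\<forall>x. T x = x \<longrightarrow> (\<exists>t. x = t *\<^sub>R e))"

lemma PP_transfer:
  assumes "linear f" "inj f" "\<And>x. f (T1 x) = T2 (f x)" "PP T1 k"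
  shows "PP T2 k"
proof -
  obtain x where x1: "T1 (T1 x) \<noteq> x" and x2: "T1 (T1 x) + (2*k) *\<^sub>R T1 x + x = 0"
    using assms(4) unfolding PP_def by blast
  have "T2 (T2 (f x)) = f (T1 (T1 x))" by (simp add: assms(3))
  then have a: "T2 (T2 (f x)) \<noteq> f x" using x1 assms(2) by (metis injD)
  have "f (T1 (T1 x) + (2*k) *\<^sub>R T1 x + x) = 0" using x2 linear_0[OF assms(1)] by simp
  then have "T2 (T2 (f x)) + (2*k) *\<^sub>R T2 (f x) + f x = 0"
    by (simp add: linear_add[OF assms(1)] linear_scale[OF assms(1)] assms(3))
  with a show ?thesis unfolding PP_def by blast
qed

lemma FF_transfer:
  assumes "linear f" "bij f" "\<And>x. f (T1 x) = T2 (f x)" "f e1 = e2" "FF T1 e1"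
  shows "FF T2 e2"
  unfolding FF_def
proof (intro allI impI)
  fix y assume y: "T2 y = y"
  obtain x where x: "y = f x" using assms(2) by (metis bij_pointE)
  have "f (T1 x) = f x" using y x assms(3) by simp
  then have "T1 x = x" using assms(2) by (metis bij_is_inj injD)
  then obtain t where "x = t *\<^sub>R e1" using assms(5) unfolding FF_def by blast
  then have "y = t *\<^sub>R e2" using x assms(4) linear_scale[OF assms(1)] by simp
  then show "\<exists>t. y = t *\<^sub>R e2" by blast
qed


lemma PP_yes:
  assumes h: "g*g + d*d = 1" and d: "d \<noteq> 0"
  shows "PP (Tm g d) g"
  unfolding PP_def
proof (intro exI conjI)
  let ?x = "((Complex 0 1, 0), (0, 0)) :: oct"
  show "Tm g d (Tm g d ?x) \<noteq> ?x"
  proof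
    assume "Tm g d (Tm g d ?x) = ?x"
    then have "g*g - d*d = 1" "g*d = 0"
      by (auto simp: Tm_def complex_eq_iff algebra_simps)
    then have "g = 0" "g*g - d*d = 1" using d by auto
    then have "- (d*d) = 1" by simp
    moreover have "d*d \<ge> 0" by simp
    ultimately show False by linarith
  qed
  show "Tm g d (Tm g d ?x) + (2*g) *\<^sub>R Tm g d ?x + ?x = 0"
    using h by (auto simp: Tm_def complex_eq_iff algebra_simps zero_prod_def)
qed

lemma blk:
  fixes g d k p q :: real
  assumes h: "g*g + d*d = 1" and k: "k \<noteq> g"
    and e1: "-g*(-g*p + d*q) + d*(-g*q - d*p) + 2*k*(-g*p + d*q) + p = 0"
    and e2: "-g*(-g*q - d*p) - d*(-g*p + d*q) + 2*k*(-g*q - d*p) + q = 0"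
  shows "p = 0 \<and> q = 0"
proof -
  have "-g*(-g*p + d*q) + d*(-g*q - d*p) + 2*k*(-g*p + d*q) + p
        = 2*(k-g)*(-g*p + d*q) + (1 - (g*g+d*d))*p" by (simp add: algebra_simps)
  then have u: "-g*p + d*q = 0" using e1 h k by simp
  have "-g*(-g*q - d*p) - d*(-g*p + d*q) + 2*k*(-g*q - d*p) + q
        = 2*(k-g)*(-g*q - d*p) + (1 - (g*g+d*d))*q" by (simp add: algebra_simps)
  then have w: "-g*q - d*p = 0" using e2 h k by simp
  have "p = (g*g+d*d)*p" using h by simp
  also have "\<dots> = -g*(-g*p + d*q) - d*(-g*q - d*p)" by (simp add: algebra_simps)
  finally have p: "p = -g*(-g*p + d*q) - d*(-g*q - d*p)" .
  have "q = (g*g+d*d)*q" using h by simp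
  also have "\<dots> = d*(-g*p + d*q) - g*(-g*q - d*p)" by (simp add: algebra_simps)
  finally have q: "q = d*(-g*p + d*q) - g*(-g*q - d*p)" .
  show ?thesis using p q u w by simp
qed

lemma PP_uniq:
  assumes h: "g*g + d*d = 1" and P: "PP (Tm g d) k"
  shows "k = g"
proof (rule ccontr)
  assume k: "k \<noteq> g"
  obtain x where ne: "Tm g d (Tm g d x) \<noteq> x" and eq: "Tm g d (Tm g d x) + (2*k) *\<^sub>R Tm g d x + x = 0"
    using P unfolding PP_def by blast
  obtain z1 z2 z3 z4 where x: "x = ((z1,z2),(z3,z4))" by (metis prod.collapse)
  have E: "Im (fst (fst (Tm g d (Tm g d x) + (2*k) *\<^sub>R Tm g d x + x))) = 0"
          "Im (fst (snd (Tm g d (Tm g d x) + (2*k) *\<^sub>R Tm g d x + x))) = 0"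
          "Re (snd (fst (Tm g d (Tm g d x) + (2*k) *\<^sub>R Tm g d x + x))) = 0"
          "Re (snd (snd (Tm g d (Tm g d x) + (2*k) *\<^sub>R Tm g d x + x))) = 0"
          "Im (snd (fst (Tm g d (Tm g d x) + (2*k) *\<^sub>R Tm g d x + x))) = 0"
          "Im (snd (snd (Tm g d (Tm g d x) + (2*k) *\<^sub>R Tm g d x + x))) = 0"
    by (simp_all only: eq) (simp_all add: zero_prod_def)
  have b1: "Im z1 = 0 \<and> Im z3 = 0"
    by (rule blk[OF h k]) (use E(1,2) in \<open>simp_all add: Tm_def x algebra_simps\<close>)
  have b2: "Re z2 = 0 \<and> Re z4 = 0"
    by (rule blk[OF h k]) (use E(3,4) in \<open>simp_all add: Tm_def x algebra_simps\<close>)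
  have b3: "Im z2 = 0 \<and> Im z4 = 0"
    by (rule blk[OF h k]) (use E(5,6) in \<open>simp_all add: Tm_def x algebra_simps\<close>)
  have c1: "g*(g*a + d*b) + d*(-g*b + d*a) = a" for a b :: real
  proof -
    have "g*(g*a + d*b) + d*(-g*b + d*a) = (g*g+d*d)*a" by (simp add: algebra_simps)
    then show ?thesis using h by simp
  qed
  have c2: "-g*(-g*b + d*a) + d*(g*a + d*b) = b" for a b :: real
  proof -
    have "-g*(-g*b + d*a) + d*(g*a + d*b) = (g*g+d*d)*b" by (simp add: algebra_simps)
    then show ?thesis using h by simp
  qed
  have "Tm g d (Tm g d x) = x"
  proof -
    have s1: "Tm g d x = ((Complex (g*Re z1 + d*Re z3) 0, 0),(Complex (-g*Re z3 + d*Re z1) 0, 0))"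
      using b1 b2 b3 by (simp add: Tm_def x complex_eq_iff)
    have "Tm g d ((Complex (g*Re z1 + d*Re z3) 0, 0),(Complex (-g*Re z3 + d*Re z1) 0, 0))
       = ((Complex (g*(g*Re z1 + d*Re z3) + d*(-g*Re z3 + d*Re z1)) 0, 0),
          (Complex (-g*(-g*Re z3 + d*Re z1) + d*(g*Re z1 + d*Re z3)) 0, 0))"
      unfolding Tm_def by (simp add: complex_eq_iff zero_prod_def)
    also have "\<dots> = x" unfolding c1 c2 using b1 b2 b3 x by (simp add: complex_eq_iff)
    finally show ?thesis using s1 by simp
  qed
  with ne show False by simp
qed

lemma FF_one:
  assumes a: "a*a = 1"
  shows "FF (Tm 1 0) (S2 a 0)"
  unfolding FF_def
proof (intro allI impI)
  fix x assume T: "Tm 1 0 x = x"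
  obtain z1 z2 z3 z4 where x: "x = ((z1,z2),(z3,z4))" by (metis prod.collapse)
  have "Tm 1 0 x = ((Complex (Re z1) (- Im z1), Complex (- Re z2) (- Im z2)), (Complex (- Re z3) (- Im z3), Complex (- Re z4) (- Im z4)))"
    by (simp add: Tm_def x)
  then have e: "Complex (Re z1) (- Im z1) = z1" "Complex (- Re z2) (- Im z2) = z2"
      "Complex (- Re z3) (- Im z3) = z3" "Complex (- Re z4) (- Im z4) = z4"
    using T x by simp_all
  have z: "Im z1 = 0" "z2 = 0" "z3 = 0" "z4 = 0"
    using e by (simp_all add: complex_eq_iff)
  have "x = (Re z1 * a) *\<^sub>R S2 a 0"
    using z a by (simp add: x S2_def complex_eq_iff zero_prod_def)
  then show "\<exists>t. x = t *\<^sub>R S2 a 0" by blast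
qed

lemma FF_zero: "\<not> FF (Tm (-1) 0) (S2 0 1)"
proof
  assume F: "FF (Tm (-1) 0) (S2 0 1)"
  let ?x = "((Complex 0 1, 0), (0, 0)) :: oct"
  have "Tm (-1) 0 ?x = ?x" by (simp add: Tm_def complex_eq_iff)
  then obtain t where "?x = t *\<^sub>R S2 0 1" using F unfolding FF_def by blast
  then show False by (simp add: S2_def complex_eq_iff)
qed


definition GG :: "real \<Rightarrow> real" where "GG a = 2*a\<^sup>2 - 1"
definition DD :: "real \<Rightarrow> real" where "DD a = 2 * a * sqrt (1 - a\<^sup>2)"

lemma sq_Sd: "\<bar>a\<bar> \<le> 1 \<Longrightarrow> sqrt (1 - a\<^sup>2) * sqrt (1 - a\<^sup>2) = 1 - a\<^sup>2"
  by (simp add: abs_square_le_1)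

lemma T_Sd:
  assumes "\<bar>a\<bar> \<le> 1"
  shows "star_mul (Sd a) x (Sd a) = Tm (GG a) (DD a) x"
proof -
  have "a*a - sqrt (1 - a\<^sup>2) * sqrt (1 - a\<^sup>2) = GG a"
    using sq_Sd[OF assms] by (simp add: GG_def power2_eq_square)
  then show ?thesis unfolding Sd_S2 T_S2 DD_def by (simp add: mult.assoc)
qed

lemma GD: "\<bar>a\<bar> \<le> 1 \<Longrightarrow> GG a * GG a + DD a * DD a = 1"
proof -
  assume a: "\<bar>a\<bar> \<le> 1"
  have "DD a * DD a = 4*a\<^sup>2*(sqrt (1 - a\<^sup>2) * sqrt (1 - a\<^sup>2))"
    by (simp add: DD_def power2_eq_square algebra_simps)
  also have "\<dots> = 4*a\<^sup>2*(1 - a\<^sup>2)" using sq_Sd[OF a] by simp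
  finally show ?thesis by (simp add: GG_def power2_eq_square algebra_simps)
qed

lemma unit_Sd: "\<bar>a\<bar> \<le> 1 \<Longrightarrow> a*a + sqrt (1 - a\<^sup>2) * sqrt (1 - a\<^sup>2) = 1"
  using sq_Sd by (simp add: power2_eq_square)

lemma inv_main:
  assumes iso: "alg_iso (star_mul (Sd a1)) (star_mul (Sd a2)) h"
    and a1: "\<bar>a1\<bar> \<le> 1" and a2: "\<bar>a2\<bar> \<le> 1"
  shows "h (Sd a1) = Sd a2" "\<And>x. h (Tm (GG a1) (DD a1) x) = Tm (GG a2) (DD a2) (h x)"
proof -
  have l: "linear h" and b: "bij h" and m: "\<And>x y. h (star_mul (Sd a1) x y) = star_mul (Sd a2) (h x) (h y)"
    using iso unfolding alg_iso_def by blast+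
  have "\<forall>y. star_mul (Sd a2) (h (Sd a1)) y = y"
  proof
    fix y
    obtain z where z: "y = h z" using b by (metis bij_pointE)
    have "star_mul (Sd a2) (h (Sd a1)) (h z) = h (star_mul (Sd a1) (Sd a1) z)" by (simp add: m)
    also have "\<dots> = h z" using S2_unit[OF unit_Sd[OF a1]] by (simp add: Sd_S2)
    finally show "star_mul (Sd a2) (h (Sd a1)) y = y" using z by simp
  qed
  then show u: "h (Sd a1) = Sd a2"
    using S2_unit_uniq[OF unit_Sd[OF a2]] by (simp add: Sd_S2)
  show "h (Tm (GG a1) (DD a1) x) = Tm (GG a2) (DD a2) (h x)" for x
    using m[of x "Sd a1"] u T_Sd[OF a1, of x] T_Sd[OF a2, of "h x"] by simp
qed

lemma std_case:
  assumes iso: "alg_iso (star_mul (Sd a1)) (star_mul (Sd a2)) h"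
    and a1: "\<bar>a1\<bar> \<le> 1" and a2: "\<bar>a2\<bar> \<le> 1" and d: "DD a1 \<noteq> 0"
  shows "\<bar>a1\<bar> = \<bar>a2\<bar>"
proof -
  have l: "linear h" and b: "bij h" using iso unfolding alg_iso_def by blast+
  have "PP (Tm (GG a1) (DD a1)) (GG a1)" using PP_yes[OF GD[OF a1] d] .
  then have "PP (Tm (GG a2) (DD a2)) (GG a1)"
    using PP_transfer[of h "Tm (GG a1) (DD a1)" "Tm (GG a2) (DD a2)", OF l bij_is_inj[OF b] inv_main(2)[OF iso a1 a2]] by blast
  then have "GG a1 = GG a2" using PP_uniq[OF GD[OF a2]] by simp
  then have "a1\<^sup>2 = a2\<^sup>2" by (simp add: GG_def)
  then show ?thesis by (metis real_sqrt_abs)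
qed

lemma DD0: "\<bar>a\<bar> \<le> 1 \<Longrightarrow> DD a = 0 \<Longrightarrow> a = 0 \<or> a*a = 1"
proof -
  assume a: "\<bar>a\<bar> \<le> 1" "DD a = 0"
  then have "a = 0 \<or> sqrt (1 - a\<^sup>2) = 0" by (simp add: DD_def)
  then show ?thesis using a(1) by (auto simp: power2_eq_square)
qed

lemma std_abs:
  assumes iso: "alg_iso (star_mul (Sd a1)) (star_mul (Sd a2)) h"
    and a1: "\<bar>a1\<bar> \<le> 1" and a2: "\<bar>a2\<bar> \<le> 1"
  shows "\<bar>a1\<bar> = \<bar>a2\<bar>"
proof -
  have iso': "alg_iso (star_mul (Sd a2)) (star_mul (Sd a1)) (inv h)" using iso_inv[OF iso] .
  show ?thesis
  proof (cases "DD a1 \<noteq> 0 \<or> DD a2 \<noteq> 0")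
    case True
    then show ?thesis using std_case[OF iso a1 a2] std_case[OF iso' a2 a1] by auto
  next
    case False
    then have c1: "a1 = 0 \<or> a1*a1 = 1" and c2: "a2 = 0 \<or> a2*a2 = 1" using DD0 a1 a2 by auto
    have key: False if z: "b1 = 0" and o: "b2*b2 = 1" and
      i: "alg_iso (star_mul (Sd b1)) (star_mul (Sd b2)) f" for b1 b2 f
    proof -
      have "b2\<^sup>2 = 1" using o by (simp add: power2_eq_square)
      then have b2: "\<bar>b2\<bar> \<le> 1" by (simp add: abs_square_eq_1)
      have b1: "\<bar>b1\<bar> \<le> 1" using z by simp
      have i': "alg_iso (star_mul (Sd b2)) (star_mul (Sd b1)) (inv f)" using iso_inv[OF i] .
      have l: "linear (inv f)" and b: "bij (inv f)" using i' unfolding alg_iso_def by blast+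
      have g2: "GG b2 = 1" "DD b2 = 0" using o by (simp_all add: GG_def DD_def power2_eq_square)
      have g1: "GG b1 = -1" "DD b1 = 0" using z by (simp_all add: GG_def DD_def)
      have S2b: "Sd b2 = S2 b2 0" using o by (simp add: Sd_S2 power2_eq_square)
      have S1b: "Sd b1 = S2 0 1" using z by (simp add: Sd_S2)
      have "FF (Tm (GG b2) (DD b2)) (Sd b2)" using FF_one[OF o] g2 S2b by simp
      then have "FF (Tm (GG b1) (DD b1)) (Sd b1)"
        using FF_transfer[of "inv f" "Tm (GG b2) (DD b2)" "Tm (GG b1) (DD b1)" "Sd b2" "Sd b1", OF l b inv_main(2)[OF i' b2 b1] inv_main(1)[OF i' b2 b1]] by blast
      then show False using FF_zero g1 S1b by simp
    qed
    show ?thesis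
    proof -
      { assume "a1 = 0" "a2*a2 = 1" then have False using key iso by blast }
      moreover
      { assume "a2 = 0" "a1*a1 = 1" then have False using key iso' by blast }
      moreover
      { assume "a1*a1 = 1" "a2*a2 = 1"
        then have "a1\<^sup>2 = 1" "a2\<^sup>2 = 1" by (simp_all add: power2_eq_square)
        then have ?thesis by (simp add: abs_square_eq_1) }
      ultimately show ?thesis using c1 c2 by auto
    qed
  qed
qed

lemma oRe_le: "norm a = 1 \<Longrightarrow> \<bar>oRe a\<bar> \<le> 1"
proof -
  assume n: "norm a = 1"
  obtain z1 z2 q where a: "a = ((z1,z2),q)" by (metis prod.collapse)
  have "\<bar>Re z1\<bar> \<le> cmod z1" by (rule abs_Re_le_cmod)
  also have "\<dots> \<le> norm (z1,z2)" by (metis fst_conv norm_fst_le)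
  also have "\<dots> \<le> norm a" unfolding a by (metis fst_conv norm_fst_le)
  finally show ?thesis using n a by simp
qed

lemma oRe_neg: "oRe (- a) = - oRe a"
  by (cases a) (auto)

theorem corollary1:
  fixes a b :: oct
  assumes "norm a = 1" and "norm b = 1"
  shows "(\<exists>f. alg_iso (star_mul a) (star_mul b) f) \<longleftrightarrow> \<bar>oRe a\<bar> = \<bar>oRe b\<bar>"
proof
  obtain fa where fa: "alg_iso (star_mul a) (star_mul (Sd (oRe a))) fa" using std_iso[OF assms(1)] by blast
  obtain fb where fb: "alg_iso (star_mul b) (star_mul (Sd (oRe b))) fb" using std_iso[OF assms(2)] by blast
  {
    assume "\<exists>f. alg_iso (star_mul a) (star_mul b) f"
    then obtain f where f: "alg_iso (star_mul a) (star_mul b) f" by blast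
    have "alg_iso (star_mul (Sd (oRe a))) (star_mul (Sd (oRe b))) (fb \<circ> (f \<circ> inv fa))"
      by (rule iso_comp[OF iso_comp[OF iso_inv[OF fa] f] fb])
    then show "\<bar>oRe a\<bar> = \<bar>oRe b\<bar>" using std_abs oRe_le assms by blast
  }
  {
    assume e: "\<bar>oRe a\<bar> = \<bar>oRe b\<bar>"
    show "\<exists>f. alg_iso (star_mul a) (star_mul b) f"
    proof (cases "oRe a = oRe b")
      case True
      then have fa': "alg_iso (star_mul a) (star_mul (Sd (oRe b))) fa" using fa by simp
      have "alg_iso (star_mul a) (star_mul b) (inv fb \<circ> fa)"
        using iso_comp[OF fa' iso_inv[OF fb]] by simp
      then show ?thesis by blast
    next
      case False
      then have r: "oRe (- a) = oRe b" using e oRe_neg by (auto simp: abs_if split: if_splits)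
      have n: "norm (- a) = 1" using assms(1) by simp
      obtain fc where fc: "alg_iso (star_mul (- a)) (star_mul (Sd (oRe (- a)))) fc"
        using std_iso[OF n] by blast
      have fc': "alg_iso (star_mul (- a)) (star_mul (Sd (oRe b))) fc" using fc r by simp
      have "alg_iso (star_mul a) (star_mul b) (inv fb \<circ> (fc \<circ> uminus))"
        using iso_comp[OF iso_comp[OF neg_iso fc'] iso_inv[OF fb]] by simp
      then show ?thesis by blast
    qed
  }
qed

end
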